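(* There exist $p\in\mathcal P$ and $x\in N$ such that $D_{\mu(p)}(p)=D_{\mu(p^r)}(p^r)=\{x\}$ if and only if $(h,n)\notin T_1$, where $T_1=\{(h,n): h\le3\}\cup\{(h,n): n\le3\}\cup\{(4,4),(5,4),(7,4),(5,5)\}$.
   Context: Let $n,h\ge2$ be integers, $N=\{1,\dots,n\}$, $H=\{1,\dots,h\}$. $\mathcal P$ is the set of $h$-tuples $p=(p_1,\dots,p_h)$ of linear orders on $N$; $p^r$ is obtained by reversing each $p_i$; $x>_{p_i}y$ means $x\ne y$ and $p_i$ ranks $x$ above $y$. For an integer $\mu$ with $h/2<\mu\le h$, $D_\mu(p)=\{x\in N: \forall y\in N,\ |\{i: y>_{p_i}x\}|<\mu\}$, and $\mu(p)=\min\{\mu\in\mathbb N\cap(h/2,h]: D_\mu(p)\neq\varnothing\}$. *)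

theory Defs
  imports Main
begin

text \<open>A linear order on N = {1..n} is a relation r with linear_order_on {1..n} r;
  (x,y) \<in> r means that r ranks x at least as high as y.\<close>

definition profile :: "nat \<Rightarrow> nat \<Rightarrow> (nat \<Rightarrow> (nat \<times> nat) set) \<Rightarrow> bool" where
  "profile n h p \<longleftrightarrow> (\<forall>i\<in>{1..h}. linear_order_on {1..n} (p i))"

definition rev_profile :: "(nat \<Rightarrow> (nat \<times> nat) set) \<Rightarrow> (nat \<Rightarrow> (nat \<times> nat) set)" where
  "rev_profile p = (\<lambda>i. (p i)\<inverse>)"

definition above :: "(nat \<times> nat) set \<Rightarrow> nat \<Rightarrow> nat \<Rightarrow> bool" where
  "above r y x \<longleftrightarrow> y \<noteq> x \<and> (y, x) \<in> r"

definition Dmu :: "nat \<Rightarrow> nat \<Rightarrow> nat \<Rightarrow> (nat \<Rightarrow> (nat \<times> nat) set) \<Rightarrow> nat set" where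
  "Dmu n h m p = {x \<in> {1..n}. \<forall>y\<in>{1..n}. card {i \<in> {1..h}. above (p i) y x} < m}"

definition mu :: "nat \<Rightarrow> nat \<Rightarrow> (nat \<Rightarrow> (nat \<times> nat) set) \<Rightarrow> nat" where
  "mu n h p = (LEAST m. h < 2 * m \<and> m \<le> h \<and> Dmu n h m p \<noteq> {})"

definition T1 :: "(nat \<times> nat) set" where
  "T1 = {(h, n). h \<le> 3} \<union> {(h, n). n \<le> 3} \<union> {(4,4), (5,4), (7,4), (5,5)}"

end

theory Submission
  imports Defs
begin


lemma lin_facts:
  assumes "linear_order_on A r"
  shows "r \<subseteq> A \<times> A" "\<And>a. a \<in> A \<Longrightarrow> (a,a) \<in> r"
    "\<And>a b d. (a,b) \<in> r \<Longrightarrow> (b,d) \<in> r \<Longrightarrow> (a,d) \<in> r"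
    "\<And>a b. (a,b) \<in> r \<Longrightarrow> (b,a) \<in> r \<Longrightarrow> a = b"
    "\<And>a b. a \<in> A \<Longrightarrow> b \<in> A \<Longrightarrow> a \<noteq> b \<Longrightarrow> (a,b) \<in> r \<or> (b,a) \<in> r"
  using assms unfolding linear_order_on_def partial_order_on_def preorder_on_def refl_on_def
    total_on_def antisym_def trans_def by blast+

definition cnt :: "nat \<Rightarrow> (nat \<Rightarrow> (nat \<times> nat) set) \<Rightarrow> nat \<Rightarrow> nat \<Rightarrow> nat" where
  "cnt h p y z = card {i \<in> {1..h}. above (p i) y z}"

definition good :: "nat \<Rightarrow> nat \<Rightarrow> (nat \<Rightarrow> nat \<Rightarrow> nat) \<Rightarrow> nat \<Rightarrow> bool" where
  "good n h c x \<longleftrightarrow> (\<forall>z\<in>{1..n}. z \<noteq> x \<longrightarrow>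
     (\<exists>y\<in>{1..n}. h div 2 + 1 \<le> c y z \<and> (\<forall>w\<in>{1..n}. c w x < c y z)))"

lemma cnt_le: "cnt h p y z \<le> h"
proof -
  have "cnt h p y z \<le> card {1..h}" unfolding cnt_def by (rule card_mono) auto
  then show ?thesis by simp
qed

lemma cnt_refl[simp]: "cnt h p y y = 0"
  unfolding cnt_def above_def by simp

lemma cnt_rev: "cnt h (rev_profile p) y z = cnt h p z y"
proof -
  have "{i \<in> {1..h}. above (rev_profile p i) y z} = {i\<in>{1..h}. above (p i) z y}"
    unfolding above_def rev_profile_def by auto
  then show ?thesis unfolding cnt_def by simp
qed

lemma profile_rev: "profile n h p \<Longrightarrow> profile n h (rev_profile p)"
  unfolding profile_def rev_profile_def by simp

lemma cnt_sum:
  assumes "profile n h p" "y \<in> {1..n}" "z \<in> {1..n}" "y \<noteq> z"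
  shows "cnt h p y z + cnt h p z y = h"
proof -
  let ?A = "{i \<in> {1..h}. above (p i) y z}" and ?B = "{i \<in> {1..h}. above (p i) z y}"
  have lin: "\<And>i. i \<in> {1..h} \<Longrightarrow> linear_order_on {1..n} (p i)" using assms(1) unfolding profile_def by blast
  have disj: "?A \<inter> ?B = {}" using lin_facts(4)[OF lin] unfolding above_def by blast
  moreover have "?A \<union> ?B = {1..h}" using lin_facts(5)[OF lin] assms(2-4) unfolding above_def by blast
  moreover have "card (?A \<union> ?B) = card ?A + card ?B" by (rule card_Un_disjoint) (use disj in auto)
  ultimately have "card ?A + card ?B = card {1..h}" by simp
  then show ?thesis unfolding cnt_def by simp
qed

lemma card_filter_sum: "card {i \<in> I. P i} = (\<Sum>i\<in>I. if P i then 1 else (0::nat))" if "finite I"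
proof -
  have "{i \<in> I. P i} = I \<inter> {i. P i}" by auto
  then show ?thesis using that by (simp add: sum.If_cases)
qed

lemma cnt_as_sum: "cnt h p y z = (\<Sum>i\<in>{1..h}. if above (p i) y z then 1 else 0)"
  unfolding cnt_def by (rule card_filter_sum) simp

lemma cnt_cycle3:
  assumes "profile n h p" "a \<in> {1..n}" "b \<in> {1..n}" "d \<in> {1..n}" "distinct [a,b,d]"
  shows "cnt h p a b + cnt h p b d + cnt h p d a \<le> 2 * h"
proof -
  have lin: "\<And>i. i \<in> {1..h} \<Longrightarrow> linear_order_on {1..n} (p i)" using assms(1) unfolding profile_def by blast
  have "cnt h p a b + cnt h p b d + cnt h p d a =
     (\<Sum>i\<in>{1..h}. (if above (p i) a b then 1 else 0) + (if above (p i) b d then 1 else 0) + (if above (p i) d a then 1 else 0))"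
    unfolding cnt_as_sum by (simp add: sum.distrib)
  also have "\<dots> \<le> (\<Sum>i\<in>{1..h}. 2)"
  proof (rule sum_mono)
    fix i assume i: "i \<in> {1..h}"
    have "\<not> (above (p i) a b \<and> above (p i) b d \<and> above (p i) d a)"
    proof -
      have ne: "a \<noteq> b" "b \<noteq> d" "a \<noteq> d" using assms(5) by auto
      show ?thesis using lin_facts(3,4)[OF lin[OF i]] ne unfolding above_def by blast
    qed
    then show "(if above (p i) a b then 1 else 0) + (if above (p i) b d then 1 else 0) + (if above (p i) d a then 1 else 0) \<le> (2::nat)"
      by auto
  qed
  finally show ?thesis by simp
qed

lemma cnt_cycle4:
  assumes "profile n h p" "a \<in> {1..n}" "b \<in> {1..n}" "d \<in> {1..n}" "e \<in> {1..n}" "distinct [a,b,d,e]"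
  shows "cnt h p a b + cnt h p b d + cnt h p d e + cnt h p e a \<le> 3 * h"
proof -
  have lin: "\<And>i. i \<in> {1..h} \<Longrightarrow> linear_order_on {1..n} (p i)" using assms(1) unfolding profile_def by blast
  have "cnt h p a b + cnt h p b d + cnt h p d e + cnt h p e a =
     (\<Sum>i\<in>{1..h}. (if above (p i) a b then 1 else 0) + (if above (p i) b d then 1 else 0) + (if above (p i) d e then 1 else 0) + (if above (p i) e a then 1 else 0))"
    unfolding cnt_as_sum by (simp add: sum.distrib)
  also have "\<dots> \<le> (\<Sum>i\<in>{1..h}. 3)"
  proof (rule sum_mono)
    fix i assume i: "i \<in> {1..h}"
    have tr: "\<And>a b d. (a,b) \<in> p i \<Longrightarrow> (b,d) \<in> p i \<Longrightarrow> (a,d) \<in> p i" using lin_facts(3)[OF lin[OF i]] by blast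
    have an: "\<And>a b. (a,b) \<in> p i \<Longrightarrow> (b,a) \<in> p i \<Longrightarrow> a = b" using lin_facts(4)[OF lin[OF i]] by blast
    have "\<not> (above (p i) a b \<and> above (p i) b d \<and> above (p i) d e \<and> above (p i) e a)"
    proof -
      have ne: "a \<noteq> b" "b \<noteq> d" "a \<noteq> d" "a \<noteq> e" "b \<noteq> e" "d \<noteq> e" using assms(6) by auto
      show ?thesis using tr an ne unfolding above_def by blast
    qed
    then show "(if above (p i) a b then 1 else 0) + (if above (p i) b d then 1 else 0) + (if above (p i) d e then 1 else 0) + (if above (p i) e a then 1 else 0) \<le> (3::nat)"
      by auto
  qed
  finally show ?thesis by simp
qed

lemma maximal_exists:
  assumes "linear_order_on A r" "finite S" "S \<noteq> {}" "S \<subseteq> A"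
  shows "\<exists>t\<in>S. \<forall>y\<in>S. (y,t) \<in> r \<longrightarrow> y = t"
  using assms(2,3,4)
proof (induction S rule: finite_ne_induct)
  case (singleton x) then show ?case by auto
next
  case (insert a S)
  then obtain t where t: "t \<in> S" "\<forall>y\<in>S. (y,t) \<in> r \<longrightarrow> y = t" by auto
  show ?case
  proof (cases "(a,t) \<in> r")
    case True
    have "\<forall>y\<in>insert a S. (y,a) \<in> r \<longrightarrow> y = a"
      using t True lin_facts(3,4)[OF assms(1)] by blast
    then show ?thesis by blast
  next
    case False
    then show ?thesis using t by blast
  qed
qed

lemma pareto_top:
  assumes "profile n h p" "h \<ge> 1" "S \<subseteq> {1..n}" "S \<noteq> {}"
  shows "\<exists>t\<in>S. \<forall>y\<in>S. cnt h p y t < h"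
proof -
  have lin: "linear_order_on {1..n} (p 1)" using assms(1,2) unfolding profile_def by auto
  have "finite S" using assms(3) finite_subset by blast
  then obtain t where t: "t \<in> S" "\<forall>y\<in>S. (y,t) \<in> p 1 \<longrightarrow> y = t"
    using maximal_exists[OF lin _ assms(4,3)] by blast
  have "\<forall>y\<in>S. cnt h p y t < h"
  proof
    fix y assume y: "y \<in> S"
    have "{i \<in> {1..h}. above (p i) y t} \<subseteq> {1..h} - {1}" using t y unfolding above_def by auto
    then have "cnt h p y t \<le> card ({1..h} - {1::nat})" unfolding cnt_def by (rule card_mono[rotated]) auto
    then show "cnt h p y t < h" using assms(2) by simp
  qed
  then show ?thesis using t by blast
qed

lemma pareto_bot:
  assumes "profile n h p" "h \<ge> 1" "S \<subseteq> {1..n}" "S \<noteq> {}"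
  shows "\<exists>t\<in>S. \<forall>y\<in>S. cnt h p t y < h"
  using pareto_top[OF profile_rev[OF assms(1)] assms(2-4)] by (simp add: cnt_rev)




lemma in_wit3:
  fixes c :: "nat \<Rightarrow> nat \<Rightarrow> nat"
  assumes "\<exists>y\<in>{x,a,b,d}. h div 2 + 1 \<le> c y a \<and> (\<forall>w\<in>{x,a,b,d}. c w x < c y a)"
    and "c a a = 0" "c a b + c b a = h" "h div 2 + 1 \<le> c a b"
  shows "c x a > c a x \<or> c d a > c a x"
proof -
  obtain y where y: "y \<in> {x,a,b,d}" "h div 2 + 1 \<le> c y a" "\<forall>w\<in>{x,a,b,d}. c w x < c y a"
    using assms(1) by blast
  have q: "h < 2 * (h div 2 + 1)" by simp
  from y(1) consider "y = x" | "y = a" | "y = b" | "y = d" by blast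
  then show ?thesis
  proof cases
    case 1 then show ?thesis using y(3) by auto
  next
    case 2 then show ?thesis using y(2) assms(2) by simp
  next
    case 3 then have "h div 2 + 1 \<le> c b a" using y(2) by simp
    then show ?thesis using assms(3,4) q by linarith
  next
    case 4 then show ?thesis using y(3) by auto
  qed
qed

lemma core4:
  fixes c :: "nat \<Rightarrow> nat \<Rightarrow> nat" and x a b d h :: nat
  assumes h: "h = 4 \<or> h = 5 \<or> h = 7"
    and s: "c x a + c a x = h" "c x b + c b x = h" "c x d + c d x = h"
       "c a b + c b a = h" "c a d + c d a = h" "c b d + c d b = h"
    and r: "c a a = 0" "c b b = 0" "c d d = 0"
    and cyc: "c a b + c b d + c d a \<le> 2*h"
    and e: "h div 2 + 1 \<le> c a b" "\<forall>w\<in>{x,a,b,d}. c x w < c a b"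
       "h div 2 + 1 \<le> c b d" "\<forall>w\<in>{x,a,b,d}. c x w < c b d"
       "h div 2 + 1 \<le> c d a" "\<forall>w\<in>{x,a,b,d}. c x w < c d a"
    and ia: "\<exists>y\<in>{x,a,b,d}. h div 2 + 1 \<le> c y a \<and> (\<forall>w\<in>{x,a,b,d}. c w x < c y a)"
    and ib: "\<exists>y\<in>{x,a,b,d}. h div 2 + 1 \<le> c y b \<and> (\<forall>w\<in>{x,a,b,d}. c w x < c y b)"
    and id: "\<exists>y\<in>{x,a,b,d}. h div 2 + 1 \<le> c y d \<and> (\<forall>w\<in>{x,a,b,d}. c w x < c y d)"
  shows False
proof -
  have ia': "c x a > c a x \<or> c d a > c a x"
    by (rule in_wit3[OF ia r(1) s(4) e(1)])
  have ib': "c x b > c b x \<or> c a b > c b x"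
    by (rule in_wit3[of x b d a]) (use ib r s e in \<open>auto simp: insert_commute add.commute\<close>)
  have id': "c x d > c d x \<or> c b d > c d x"
    by (rule in_wit3[of x d a b]) (use id r s e in \<open>auto simp: insert_commute add.commute\<close>)
  have e': "c a b > c x a" "c a b > c x b" "c a b > c x d" "c b d > c x a" "c b d > c x b" "c b d > c x d"
     "c d a > c x a" "c d a > c x b" "c d a > c x d" using e by auto
  have hh: "h \<le> 7" "h < 6" if "h \<noteq> 7" using h that by auto
  have nA: "\<not> c x a > c a x" using s(1) e'(1,4,7) cyc h by auto
  have nB: "\<not> c x b > c b x" using s(2) e'(2,5,8) cyc h by auto
  have nD: "\<not> c x d > c d x" using s(3) e'(3,6,9) cyc h by auto
  have w: "c d a > c a x" "c a b > c b x" "c b d > c d x" using ia' ib' id' nA nB nD by auto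
  have W: "2 * c d a \<ge> h+2" "2 * c a b \<ge> h+2" "2 * c b d \<ge> h+2"
    using w e'(7,2,6) s(1-3) by linarith+
  show False
  proof (cases "h = 7")
    case True
    have "c d a \<ge> 5" "c a b \<ge> 5" "c b d \<ge> 5" using W True by presburger+
    then show False using cyc True by linarith
  next
    case False
    then show False using W cyc h by linarith
  qed
qed



lemma cyc_chase:
  assumes fin: "finite Q" "card Q \<le> 4" and ne: "Q \<noteq> {}"
    and succ: "\<forall>z\<in>Q. \<exists>y\<in>Q. y \<noteq> z \<and> E z y"
    and asym: "\<forall>u\<in>Q. \<forall>v\<in>Q. E u v \<longrightarrow> \<not> E v u"
  shows "(\<exists>a\<in>Q. \<exists>b\<in>Q. \<exists>d\<in>Q. distinct [a,b,d] \<and> E a b \<and> E b d \<and> E d a) \<or>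
         (\<exists>a\<in>Q. \<exists>b\<in>Q. \<exists>d\<in>Q. \<exists>e\<in>Q. distinct [a,b,d,e] \<and> E a b \<and> E b d \<and> E d e \<and> E e a)"
proof -
  obtain z1 where z1: "z1 \<in> Q" using ne by blast
  obtain z2 where z2: "z2 \<in> Q" "z2 \<noteq> z1" "E z1 z2" using succ z1 by blast
  obtain z3 where z3: "z3 \<in> Q" "z3 \<noteq> z2" "E z2 z3" using succ z2 by blast
  have "z3 \<noteq> z1" using asym z1 z2 z3 by blast
  obtain z4 where z4: "z4 \<in> Q" "z4 \<noteq> z3" "E z3 z4" using succ z3 by blast
  have "z4 \<noteq> z2" using asym z2 z3 z4 by blast
  show ?thesis
  proof (cases "z4 = z1")
    case True
    then show ?thesis using z1 z2 z3 z4 \<open>z3 \<noteq> z1\<close> by auto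
  next
    case False
    obtain z5 where z5: "z5 \<in> Q" "z5 \<noteq> z4" "E z4 z5" using succ z4 by blast
    have "z5 \<noteq> z3" using asym z3 z4 z5 by blast
    show ?thesis
    proof (cases "z5 = z1 \<or> z5 = z2")
      case True
      then show ?thesis
      proof
        assume "z5 = z1" then show ?thesis using z1 z2 z3 z4 z5 \<open>z3 \<noteq> z1\<close> \<open>z4 \<noteq> z2\<close> False
          by (intro disjI2 bexI[of _ z1] bexI[of _ z2] bexI[of _ z3] bexI[of _ z4]) auto
      next
        assume "z5 = z2" then show ?thesis using z1 z2 z3 z4 z5 \<open>z3 \<noteq> z1\<close> \<open>z4 \<noteq> z2\<close> False
          by (intro disjI1 bexI[of _ z2] bexI[of _ z3] bexI[of _ z4]) auto
      qed
    next
      case False2: False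
      have "{z1,z2,z3,z4,z5} \<subseteq> Q" using z1 z2 z3 z4 z5 by auto
      then have "card {z1,z2,z3,z4,z5} \<le> card Q" using fin(1) by (rule card_mono[rotated])
      moreover have "card {z1,z2,z3,z4,z5} = 5"
        using z2 z3 z4 z5 \<open>z3 \<noteq> z1\<close> \<open>z4 \<noteq> z2\<close> \<open>z5 \<noteq> z3\<close> False False2 by auto
      ultimately show ?thesis using fin(2) by simp
    qed
  qed
qed

lemma cyc_small:
  assumes fin: "finite Q" "card Q \<le> 2" and ne: "Q \<noteq> {}"
    and succ: "\<forall>z\<in>Q. \<exists>y\<in>Q. y \<noteq> z \<and> E z y"
    and asym: "\<forall>u\<in>Q. \<forall>v\<in>Q. E u v \<longrightarrow> \<not> E v u"
  shows False
proof -
  obtain z1 where z1: "z1 \<in> Q" using ne by blast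
  obtain z2 where z2: "z2 \<in> Q" "z2 \<noteq> z1" "E z1 z2" using succ z1 by blast
  obtain z3 where z3: "z3 \<in> Q" "z3 \<noteq> z2" "E z2 z3" using succ z2 by blast
  have "z3 \<noteq> z1" using asym z1 z2 z3 by blast
  have "{z1,z2,z3} \<subseteq> Q" using z1 z2 z3 by auto
  then have "card {z1,z2,z3} \<le> card Q" using fin(1) by (rule card_mono[rotated])
  moreover have "card {z1,z2,z3} = 3" using z2 z3 \<open>z3 \<noteq> z1\<close> by auto
  ultimately show False using fin(2) by simp
qed



locale setting =
  fixes n h :: nat and c :: "nat \<Rightarrow> nat \<Rightarrow> nat" and x :: nat
  assumes n2: "n \<ge> 2" and h2: "h \<ge> 2" and xN: "x \<in> {1..n}"
    and S: "\<And>y z. y \<in> {1..n} \<Longrightarrow> z \<in> {1..n} \<Longrightarrow> y \<noteq> z \<Longrightarrow> c y z + c z y = h"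
    and R: "\<And>y. c y y = 0"
    and C3: "\<And>a b d. a \<in> {1..n} \<Longrightarrow> b \<in> {1..n} \<Longrightarrow> d \<in> {1..n} \<Longrightarrow> distinct [a,b,d]
              \<Longrightarrow> c a b + c b d + c d a \<le> 2 * h"
    and C4: "\<And>a b d e. a \<in> {1..n} \<Longrightarrow> b \<in> {1..n} \<Longrightarrow> d \<in> {1..n} \<Longrightarrow> e \<in> {1..n} \<Longrightarrow> distinct [a,b,d,e]
              \<Longrightarrow> c a b + c b d + c d e + c e a \<le> 3 * h"
    and TOP: "\<And>S. S \<subseteq> {1..n} \<Longrightarrow> S \<noteq> {} \<Longrightarrow> \<exists>t\<in>S. \<forall>y\<in>S. c y t < h"
    and BOT: "\<And>S. S \<subseteq> {1..n} \<Longrightarrow> S \<noteq> {} \<Longrightarrow> \<exists>t\<in>S. \<forall>y\<in>S. c t y < h"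
    and Gin: "\<And>z. z \<in> {1..n} \<Longrightarrow> z \<noteq> x \<Longrightarrow>
               \<exists>y\<in>{1..n}. h div 2 + 1 \<le> c y z \<and> (\<forall>w\<in>{1..n}. c w x < c y z)"
    and Gout: "\<And>z. z \<in> {1..n} \<Longrightarrow> z \<noteq> x \<Longrightarrow>
               \<exists>y\<in>{1..n}. y \<noteq> x \<and> h div 2 + 1 \<le> c z y \<and> (\<forall>w\<in>{1..n}. c x w < c z y)"
begin

definition "Q = {1..n} - {x}"
definition "Eo u v \<longleftrightarrow> h div 2 + 1 \<le> c u v \<and> (\<forall>w\<in>{1..n}. c x w < c u v)"

lemma q: "h < 2 * (h div 2 + 1)" by simp

lemma Q_fin: "finite Q" unfolding Q_def by simp
lemma Q_card: "card Q = n - 1" unfolding Q_def using xN by simp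
lemma Q_ne: "Q \<noteq> {}" using Q_card n2 by auto
lemma Q_sub: "Q \<subseteq> {1..n}" unfolding Q_def by auto
lemma N_eq: "{1..n} = insert x Q" unfolding Q_def using xN by auto

lemma Eo_succ: "\<forall>z\<in>Q. \<exists>y\<in>Q. y \<noteq> z \<and> Eo z y"
proof
  fix z assume z: "z \<in> Q"
  then obtain y where y: "y \<in> {1..n}" "y \<noteq> x" "h div 2 + 1 \<le> c z y" "\<forall>w\<in>{1..n}. c x w < c z y"
    using Gout unfolding Q_def by blast
  have "y \<noteq> z" using y(3) R by (metis add_is_0 le_zero_eq one_neq_zero)
  then show "\<exists>y\<in>Q. y \<noteq> z \<and> Eo z y" using y unfolding Q_def Eo_def by blast
qed

lemma asym_big: "u \<in> {1..n} \<Longrightarrow> v \<in> {1..n} \<Longrightarrow> h div 2 + 1 \<le> c u v \<Longrightarrow> h div 2 + 1 \<le> c v u \<Longrightarrow> False"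
  using S[of u v] R[of u] q by (cases "u = v") auto

lemma Eo_asym: "\<forall>u\<in>Q. \<forall>v\<in>Q. Eo u v \<longrightarrow> \<not> Eo v u"
  using asym_big Q_sub unfolding Eo_def by blast

lemma not_h2: "h \<noteq> 2"
proof
  assume h: "h = 2"
  obtain t where t: "t \<in> Q" "\<forall>y\<in>Q. c t y < h" using BOT[OF Q_sub Q_ne] by blast
  obtain y where "y \<in> Q" "Eo t y" using Eo_succ t(1) by blast
  then show False using t h unfolding Eo_def by fastforce
qed

lemma not_h3: "h \<noteq> 3"
proof
  assume h: "h = 3"
  obtain t where t: "t \<in> Q" "\<forall>y\<in>Q. c t y < h" using BOT[OF Q_sub Q_ne] by blast
  obtain y where y: "y \<in> Q" "Eo t y" using Eo_succ t(1) by blast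
  have ty: "c t y = 2" using t y h unfolding Eo_def by fastforce
  have xw: "\<forall>w\<in>{1..n}. c x w \<le> 1" using y(2) ty unfolding Eo_def by auto
  obtain s where s: "s \<in> Q" "\<forall>y\<in>Q. c y s < h" using TOP[OF Q_sub Q_ne] by blast
  have sN: "s \<in> {1..n}" "s \<noteq> x" using s(1) unfolding Q_def by auto
  obtain y' where y': "y' \<in> {1..n}" "h div 2 + 1 \<le> c y' s" "\<forall>w\<in>{1..n}. c w x < c y' s"
    using Gin[OF sN] by blast
  have "c x s + c s x = 3" using S[OF xN sN(1)] sN(2) h by simp
  then have "c s x \<ge> 2" using xw sN(1) by fastforce
  then have big: "c y' s \<ge> 3" using y'(3) sN(1) by fastforce
  show False
  proof (cases "y' = x")
    case True then show False using big xw sN(1) by fastforce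
  next
    case False
    then have "y' \<in> Q" using y'(1) unfolding Q_def by auto
    then show False using s(2) big h by fastforce
  qed
qed

lemma not_n_small: "n > 3"
proof (rule ccontr)
  assume "\<not> n > 3"
  then have "card Q \<le> 2" using Q_card by simp
  then show False using cyc_small[OF Q_fin _ Q_ne Eo_succ Eo_asym] by blast
qed

lemma not_n4: assumes n4: "n = 4" and h: "h = 4 \<or> h = 5 \<or> h = 7" shows False
proof -
  have cQ: "card Q = 3" using Q_card n4 by simp
  have c4: "card Q \<le> 4" using cQ by simp
  from cyc_chase[OF Q_fin c4 Q_ne Eo_succ Eo_asym]
  have "\<exists>a\<in>Q. \<exists>b\<in>Q. \<exists>d\<in>Q. distinct [a,b,d] \<and> Eo a b \<and> Eo b d \<and> Eo d a"
  proof (elim disjE)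
    assume "\<exists>a\<in>Q. \<exists>b\<in>Q. \<exists>d\<in>Q. \<exists>e\<in>Q. distinct [a,b,d,e] \<and> Eo a b \<and> Eo b d \<and> Eo d e \<and> Eo e a"
    then obtain a b d e where sub: "{a,b,d,e} \<subseteq> Q" and ds: "distinct [a,b,d,e]" by auto
    have "card {a,b,d,e} \<le> card Q" by (rule card_mono[OF Q_fin sub])
    moreover have "card {a,b,d,e} = 4" using ds by auto
    ultimately show ?thesis using cQ by simp
  qed auto
  then obtain a b d where abd: "a \<in> Q" "b \<in> Q" "d \<in> Q" "distinct [a,b,d]" "Eo a b" "Eo b d" "Eo d a" by blast
  have "{a,b,d} = Q" using abd cQ by (intro card_subset_eq[OF Q_fin]) auto
  then have N: "{1..n} = {x,a,b,d}" using N_eq by auto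
  have inN: "a \<in> {1..n}" "b \<in> {1..n}" "d \<in> {1..n}" using N by auto
  have nx: "a \<noteq> x" "b \<noteq> x" "d \<noteq> x" using abd unfolding Q_def by auto
  have ne: "a \<noteq> b" "b \<noteq> d" "a \<noteq> d" using abd(4) by auto
  note SS = S[OF xN inN(1)] S[OF xN inN(2)] S[OF xN inN(3)]
     S[OF inN(1) inN(2)] S[OF inN(1) inN(3)] S[OF inN(2) inN(3)]
  show False
  proof (rule core4[of h c x a b d])
    show "h = 4 \<or> h = 5 \<or> h = 7" by (rule h)
    show "c x a + c a x = h" "c x b + c b x = h" "c x d + c d x = h"
       "c a b + c b a = h" "c a d + c d a = h" "c b d + c d b = h"
      using SS nx ne by auto
    show "c a a = 0" "c b b = 0" "c d d = 0" by (simp_all add: R)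
    show "c a b + c b d + c d a \<le> 2*h" using C3[OF inN(1,2,3) abd(4)] .
    show "h div 2 + 1 \<le> c a b" "\<forall>w\<in>{x,a,b,d}. c x w < c a b"
       "h div 2 + 1 \<le> c b d" "\<forall>w\<in>{x,a,b,d}. c x w < c b d"
       "h div 2 + 1 \<le> c d a" "\<forall>w\<in>{x,a,b,d}. c x w < c d a"
      using abd(5-7) unfolding Eo_def N by auto
    show "\<exists>y\<in>{x,a,b,d}. h div 2 + 1 \<le> c y a \<and> (\<forall>w\<in>{x,a,b,d}. c w x < c y a)"
      using Gin[OF inN(1) nx(1)] unfolding N .
    show "\<exists>y\<in>{x,a,b,d}. h div 2 + 1 \<le> c y b \<and> (\<forall>w\<in>{x,a,b,d}. c w x < c y b)"
      using Gin[OF inN(2) nx(2)] unfolding N .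
    show "\<exists>y\<in>{x,a,b,d}. h div 2 + 1 \<le> c y d \<and> (\<forall>w\<in>{x,a,b,d}. c w x < c y d)"
      using Gin[OF inN(3) nx(3)] unfolding N .
  qed
qed

lemma not_n5: assumes n5: "n = 5" and h: "h = 5" shows False
proof -
  have cQ: "card Q = 4" using Q_card n5 by simp
  have c4: "card Q \<le> 4" using cQ by simp
  have qv: "h div 2 + 1 = 3" using h by simp
  have QN: "\<And>z. z \<in> Q \<Longrightarrow> z \<in> {1..n}" "\<And>z. z \<in> Q \<Longrightarrow> z \<noteq> x" unfolding Q_def by auto
  have dist3: "\<And>a b d. distinct [a,b,d] \<Longrightarrow> a \<noteq> b \<and> b \<noteq> d \<and> a \<noteq> d" by auto
  have B: "\<forall>z\<in>Q. c x z \<le> 2"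
  proof (rule ccontr)
    assume "\<not> (\<forall>z\<in>Q. c x z \<le> 2)"
    then obtain z0 where z0: "z0 \<in> Q" "c x z0 \<ge> 3" by auto
    have big: "\<And>u v. Eo u v \<Longrightarrow> c u v \<ge> 4"
    proof -
      fix u v assume "Eo u v"
      then have "c x z0 < c u v" using QN(1)[OF z0(1)] unfolding Eo_def by blast
      then show "c u v \<ge> 4" using z0(2) by linarith
    qed
    from cyc_chase[OF Q_fin c4 Q_ne Eo_succ Eo_asym] show False
    proof (elim disjE)
      assume "\<exists>a\<in>Q. \<exists>b\<in>Q. \<exists>d\<in>Q. distinct [a,b,d] \<and> Eo a b \<and> Eo b d \<and> Eo d a"
      then obtain a b d where "a \<in> Q" "b \<in> Q" "d \<in> Q" "distinct [a,b,d]" "Eo a b" "Eo b d" "Eo d a" by blast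
      note H = this
      have "c a b + c b d + c d a \<le> 2*h" using H by (intro C3 QN) auto
      then show False using big[OF H(5)] big[OF H(6)] big[OF H(7)] h by linarith
    next
      assume "\<exists>a\<in>Q. \<exists>b\<in>Q. \<exists>d\<in>Q. \<exists>e\<in>Q. distinct [a,b,d,e] \<and> Eo a b \<and> Eo b d \<and> Eo d e \<and> Eo e a"
      then obtain a b d e where "a \<in> Q" "b \<in> Q" "d \<in> Q" "e \<in> Q" "distinct [a,b,d,e]" "Eo a b" "Eo b d" "Eo d e" "Eo e a" by blast
      note H = this
      have "c a b + c b d + c d e + c e a \<le> 3*h" using H by (intro C4 QN) auto
      then show False using big[OF H(6)] big[OF H(7)] big[OF H(8)] big[OF H(9)] h by linarith
    qed
  qed
  define Ei where "Ei z y \<longleftrightarrow> 4 \<le> c y z" for z y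
  have Ei_succ: "\<forall>z\<in>Q. \<exists>y\<in>Q. y \<noteq> z \<and> Ei z y"
  proof
    fix z assume z: "z \<in> Q"
    obtain y where y: "y \<in> {1..n}" "3 \<le> c y z" "\<forall>w\<in>{1..n}. c w x < c y z"
      using Gin[OF QN[OF z]] qv by auto
    have "c x z + c z x = 5" using S[OF xN QN(1)[OF z]] QN(2)[OF z] h by simp
    then have "c z x \<ge> 3" using B z by fastforce
    then have "c y z \<ge> 4" using y(3) QN(1)[OF z] by fastforce
    moreover have "y \<noteq> x" using y(2) B z by fastforce
    moreover have "y \<noteq> z" using y(2) R by (metis not_numeral_le_zero)
    ultimately show "\<exists>y\<in>Q. y \<noteq> z \<and> Ei z y" using y(1) unfolding Q_def Ei_def by auto
  qed
  have Ei_asym: "\<forall>u\<in>Q. \<forall>v\<in>Q. Ei u v \<longrightarrow> \<not> Ei v u"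
  proof (intro ballI impI notI)
    fix u v assume uv: "u \<in> Q" "v \<in> Q" "Ei u v" "Ei v u"
    show False
    proof (cases "u = v")
      case True then show False using uv R unfolding Ei_def by simp
    next
      case False then show False using uv S[OF QN(1)[OF uv(1)] QN(1)[OF uv(2)]] h unfolding Ei_def by linarith
    qed
  qed
  from cyc_chase[OF Q_fin c4 Q_ne Ei_succ Ei_asym] show False
  proof (elim disjE)
    assume "\<exists>a\<in>Q. \<exists>b\<in>Q. \<exists>d\<in>Q. distinct [a,b,d] \<and> Ei a b \<and> Ei b d \<and> Ei d a"
    then obtain a b d where "a \<in> Q" "b \<in> Q" "d \<in> Q" "distinct [a,b,d]" "Ei a b" "Ei b d" "Ei d a" by blast
    note H = this
    have "c a d + c d b + c b a \<le> 2*h" using H by (intro C3 QN) auto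
    then show False using H(5-7) h unfolding Ei_def by linarith
  next
    assume "\<exists>a\<in>Q. \<exists>b\<in>Q. \<exists>d\<in>Q. \<exists>e\<in>Q. distinct [a,b,d,e] \<and> Ei a b \<and> Ei b d \<and> Ei d e \<and> Ei e a"
    then obtain a b d e where "a \<in> Q" "b \<in> Q" "d \<in> Q" "e \<in> Q" "distinct [a,b,d,e]" "Ei a b" "Ei b d" "Ei d e" "Ei e a" by blast
    note H = this
    have "c a e + c e d + c d b + c b a \<le> 3*h" using H by (intro C4 QN) auto
    then show False using H(6-9) h unfolding Ei_def by linarith
  qed
qed

lemma caseI: "(h, n) \<notin> T1"
  using not_h2 not_h3 not_n_small not_n4 not_n5 h2 n2 unfolding T1_def by auto

end



lemma Dmu_cnt: "Dmu n h m p = {x \<in> {1..n}. \<forall>y\<in>{1..n}. cnt h p y x < m}"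
  unfolding Dmu_def cnt_def by simp

lemma char:
  assumes p: "profile n h p" and h1: "h \<ge> 1" and n2: "n \<ge> 2" and xN: "x \<in> {1..n}"
  shows "Dmu n h (mu n h p) p = {x} \<longleftrightarrow> good n h (cnt h p) x"
proof -
  define P where "P m \<longleftrightarrow> h < 2*m \<and> m \<le> h \<and> Dmu n h m p \<noteq> {}" for m
  have Ph: "P h"
  proof -
    obtain t where "t \<in> {1..n}" "\<forall>y\<in>{1..n}. cnt h p y t < h"
      using pareto_top[OF p h1, of "{1..n}"] n2 by auto
    then have "t \<in> Dmu n h h p" unfolding Dmu_cnt by blast
    then show ?thesis unfolding P_def using h1 by auto
  qed
  have mu_eq: "mu n h p = (LEAST m. P m)" unfolding mu_def P_def by simp
  have Pmu: "P (mu n h p)" unfolding mu_eq by (rule LeastI[of P h, OF Ph])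
  have mu_le: "\<And>m. P m \<Longrightarrow> mu n h p \<le> m" unfolding mu_eq by (rule Least_le)
  show ?thesis
  proof
    assume D: "Dmu n h (mu n h p) p = {x}"
    have xin: "\<forall>w\<in>{1..n}. cnt h p w x < mu n h p" using D unfolding Dmu_cnt by blast
    have qmu: "h div 2 + 1 \<le> mu n h p" using Pmu unfolding P_def by linarith
    show "good n h (cnt h p) x" unfolding good_def
    proof (intro ballI impI)
      fix z assume z: "z \<in> {1..n}" "z \<noteq> x"
      then have "z \<notin> Dmu n h (mu n h p) p" using D by blast
      then obtain y where y: "y \<in> {1..n}" "\<not> cnt h p y z < mu n h p" using z unfolding Dmu_cnt by blast
      show "\<exists>y\<in>{1..n}. h div 2 + 1 \<le> cnt h p y z \<and> (\<forall>w\<in>{1..n}. cnt h p w x < cnt h p y z)"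
        using y xin qmu by (intro bexI[of _ y]) auto
    qed
  next
    assume G: "good n h (cnt h p) x"
    have notin: "z \<notin> Dmu n h (mu n h p) p" if z: "z \<in> {1..n}" "z \<noteq> x" for z
    proof
      assume zin: "z \<in> Dmu n h (mu n h p) p"
      obtain y where y: "y \<in> {1..n}" "h div 2 + 1 \<le> cnt h p y z" "\<forall>w\<in>{1..n}. cnt h p w x < cnt h p y z"
        using G z unfolding good_def by blast
      have lt: "cnt h p y z < mu n h p" using zin y(1) unfolding Dmu_cnt by blast
      have "x \<in> Dmu n h (cnt h p y z) p" using xN y(3) unfolding Dmu_cnt by blast
      then have "P (cnt h p y z)" unfolding P_def using y(2) cnt_le[of h p y z] by auto
      then show False using mu_le lt by fastforce
    qed
    have "Dmu n h (mu n h p) p \<noteq> {}" using Pmu unfolding P_def by blast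
    moreover have "Dmu n h (mu n h p) p \<subseteq> {1..n}" unfolding Dmu_cnt by blast
    ultimately show "Dmu n h (mu n h p) p = {x}" using notin by blast
  qed
qed

lemma setting_of_profile:
  assumes p: "profile n h p" and n2: "n \<ge> 2" and h2: "h \<ge> 2" and xN: "x \<in> {1..n}"
    and Gin: "\<And>z. z \<in> {1..n} \<Longrightarrow> z \<noteq> x \<Longrightarrow>
               \<exists>y\<in>{1..n}. h div 2 + 1 \<le> cnt h p y z \<and> (\<forall>w\<in>{1..n}. cnt h p w x < cnt h p y z)"
    and Gout: "\<And>z. z \<in> {1..n} \<Longrightarrow> z \<noteq> x \<Longrightarrow>
               \<exists>y\<in>{1..n}. y \<noteq> x \<and> h div 2 + 1 \<le> cnt h p z y \<and> (\<forall>w\<in>{1..n}. cnt h p x w < cnt h p z y)"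
  shows "setting n h (cnt h p) x"
proof
  show "n \<ge> 2" "h \<ge> 2" "x \<in> {1..n}" by fact+
  show "\<And>y z. y \<in> {1..n} \<Longrightarrow> z \<in> {1..n} \<Longrightarrow> y \<noteq> z \<Longrightarrow> cnt h p y z + cnt h p z y = h"
    using cnt_sum[OF p] by blast
  show "\<And>y. cnt h p y y = 0" by simp
  show "\<And>a b d. a \<in> {1..n} \<Longrightarrow> b \<in> {1..n} \<Longrightarrow> d \<in> {1..n} \<Longrightarrow> distinct [a,b,d]
              \<Longrightarrow> cnt h p a b + cnt h p b d + cnt h p d a \<le> 2 * h"
    using cnt_cycle3[OF p] by blast
  show "\<And>a b d e. a \<in> {1..n} \<Longrightarrow> b \<in> {1..n} \<Longrightarrow> d \<in> {1..n} \<Longrightarrow> e \<in> {1..n} \<Longrightarrow> distinct [a,b,d,e]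
              \<Longrightarrow> cnt h p a b + cnt h p b d + cnt h p d e + cnt h p e a \<le> 3 * h"
    using cnt_cycle4[OF p] by blast
  show "\<And>S. S \<subseteq> {1..n} \<Longrightarrow> S \<noteq> {} \<Longrightarrow> \<exists>t\<in>S. \<forall>y\<in>S. cnt h p y t < h"
    using pareto_top[OF p] h2 by auto
  show "\<And>S. S \<subseteq> {1..n} \<Longrightarrow> S \<noteq> {} \<Longrightarrow> \<exists>t\<in>S. \<forall>y\<in>S. cnt h p t y < h"
    using pareto_bot[OF p] h2 by auto
qed (use Gin Gout in blast)+

lemma impossible:
  assumes p: "profile n h p" and n2: "n \<ge> 2" and h2: "h \<ge> 2" and xN: "x \<in> {1..n}"
    and G1: "good n h (cnt h p) x" and G2: "good n h (\<lambda>y z. cnt h p z y) x"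
  shows "(h, n) \<notin> T1"
proof -
  let ?q = "h div 2 + 1"
  have Gin: "\<And>z. z \<in> {1..n} \<Longrightarrow> z \<noteq> x \<Longrightarrow>
               \<exists>y\<in>{1..n}. ?q \<le> cnt h p y z \<and> (\<forall>w\<in>{1..n}. cnt h p w x < cnt h p y z)"
    using G1 unfolding good_def by blast
  have Gin2: "\<And>z. z \<in> {1..n} \<Longrightarrow> z \<noteq> x \<Longrightarrow>
               \<exists>y\<in>{1..n}. ?q \<le> cnt h p z y \<and> (\<forall>w\<in>{1..n}. cnt h p x w < cnt h p z y)"
    using G2 unfolding good_def by blast
  show ?thesis
  proof (cases "\<forall>z\<in>{1..n}. z \<noteq> x \<longrightarrow> (\<exists>y\<in>{1..n}. y \<noteq> x \<and> ?q \<le> cnt h p z y \<and> (\<forall>w\<in>{1..n}. cnt h p x w < cnt h p z y))")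
    case True
    have Gout: "\<exists>y\<in>{1..n}. y \<noteq> x \<and> ?q \<le> cnt h p z y \<and> (\<forall>w\<in>{1..n}. cnt h p x w < cnt h p z y)"
      if "z \<in> {1..n}" "z \<noteq> x" for z using True that by blast
    have "setting n h (cnt h p) x"
      by (rule setting_of_profile[OF p n2 h2 xN Gin Gout])
    then show ?thesis by (rule setting.caseI)
  next
    case False
    then obtain z0 where z0: "z0 \<in> {1..n}" "z0 \<noteq> x"
      "\<not> (\<exists>y\<in>{1..n}. y \<noteq> x \<and> ?q \<le> cnt h p z0 y \<and> (\<forall>w\<in>{1..n}. cnt h p x w < cnt h p z0 y))" by blast
    obtain y0 where y0: "y0 \<in> {1..n}" "?q \<le> cnt h p z0 y0" "\<forall>w\<in>{1..n}. cnt h p x w < cnt h p z0 y0"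
      using Gin2[OF z0(1,2)] by blast
    have y0x: "y0 = x" using z0(3) y0 by blast
    have Gout2: "\<exists>y\<in>{1..n}. y \<noteq> x \<and> ?q \<le> cnt h (rev_profile p) z y \<and> (\<forall>w\<in>{1..n}. cnt h (rev_profile p) x w < cnt h (rev_profile p) z y)"
      if z: "z \<in> {1..n}" "z \<noteq> x" for z
    proof -
      obtain y where y: "y \<in> {1..n}" "?q \<le> cnt h p y z" "\<forall>w\<in>{1..n}. cnt h p w x < cnt h p y z"
        using Gin[OF z] by blast
      have "y \<noteq> x"
      proof
        assume "y = x"
        then have "cnt h p z0 x < cnt h p x z" using y(3) z0(1) by blast
        moreover have "cnt h p x z < cnt h p z0 x" using y0 y0x z(1) by blast
        ultimately show False by simp
      qed
      then show ?thesis using y by (auto simp: cnt_rev)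
    qed
    have "setting n h (cnt h (rev_profile p)) x"
      by (rule setting_of_profile[OF profile_rev[OF p] n2 h2 xN]) (use Gin2 Gout2 in \<open>auto simp: cnt_rev\<close>)
    then show ?thesis by (rule setting.caseI)
  qed
qed




definition relf :: "nat \<Rightarrow> (nat \<Rightarrow> nat) \<Rightarrow> (nat \<times> nat) set" where
  "relf n f = {(a,b). a \<in> {1..n} \<and> b \<in> {1..n} \<and> f a \<le> f b}"

lemma relf_lin:
  assumes inj: "inj_on f {1..n}" shows "linear_order_on {1..n} (relf n f)"
proof -
  have 1: "relf n f \<subseteq> {1..n} \<times> {1..n}" unfolding relf_def by blast
  have 2: "refl_on {1..n} (relf n f)" unfolding refl_on_def relf_def by blast
  have 3: "trans (relf n f)" unfolding trans_def relf_def by (blast intro: order_trans)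
  have 4: "antisym (relf n f)" unfolding antisym_def relf_def
    using inj unfolding inj_on_def by (blast intro: le_antisym)
  have 5: "total_on {1..n} (relf n f)" unfolding total_on_def relf_def by (auto simp: nat_le_linear)
  show ?thesis unfolding linear_order_on_def partial_order_on_def preorder_on_def using 1 2 3 4 5 by blast
qed

lemma above_relf: "inj_on f {1..n} \<Longrightarrow> a \<in> {1..n} \<Longrightarrow> b \<in> {1..n} \<Longrightarrow> above (relf n f) a b \<longleftrightarrow> f a < f b"
proof -
  assume inj: "inj_on f {1..n}" and a: "a \<in> {1..n}" and b: "b \<in> {1..n}"
  have "above (relf n f) a b \<longleftrightarrow> a \<noteq> b \<and> f a \<le> f b" unfolding above_def relf_def using a b by blast
  also have "\<dots> \<longleftrightarrow> f a < f b" using inj a b unfolding inj_on_def by (metis le_neq_implies_less less_imp_le less_irrefl)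
  finally show ?thesis .
qed

definition C :: "(nat \<Rightarrow> nat \<Rightarrow> nat) \<Rightarrow> nat \<Rightarrow> nat \<Rightarrow> nat \<Rightarrow> nat" where
  "C F h y z = card {i \<in> {1..h}. F i y < F i z}"

lemma cnt_relf:
  assumes "\<forall>i\<in>{1..h}. inj_on (F i) {1..n}" "y \<in> {1..n}" "z \<in> {1..n}"
  shows "cnt h (\<lambda>i. relf n (F i)) y z = C F h y z"
proof -
  have "{i \<in> {1..h}. above (relf n (F i)) y z} = {i \<in> {1..h}. F i y < F i z}"
    using above_relf assms by blast
  then show ?thesis unfolding cnt_def C_def by simp
qed

lemma C_refl[simp]: "C F h y y = 0" unfolding C_def by simp

lemma C_le: "C F h y z \<le> h"
proof -
  have "C F h y z \<le> card {1..h}" unfolding C_def by (rule card_mono) auto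
  then show ?thesis by simp
qed

lemma good_cong1:
  assumes e: "\<forall>y\<in>{1..n}. \<forall>z\<in>{1..n}. c y z = c' y z" and x: "x \<in> {1..n}" and g: "good n h c x"
  shows "good n h c' x"
  unfolding good_def
proof (intro ballI impI)
  fix z assume z: "z \<in> {1..n}" "z \<noteq> x"
  obtain y where y: "y \<in> {1..n}" "h div 2 + 1 \<le> c y z" "\<forall>w\<in>{1..n}. c w x < c y z"
    using g z unfolding good_def by blast
  have "h div 2 + 1 \<le> c' y z" using y(1,2) z(1) e by simp
  moreover have "\<forall>w\<in>{1..n}. c' w x < c' y z" using y(1,3) z(1) x e by simp
  ultimately show "\<exists>y\<in>{1..n}. h div 2 + 1 \<le> c' y z \<and> (\<forall>w\<in>{1..n}. c' w x < c' y z)" using y(1) by blast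
qed

lemma good_cong:
  assumes "\<forall>y\<in>{1..n}. \<forall>z\<in>{1..n}. c y z = c' y z" "x \<in> {1..n}"
  shows "good n h c x = good n h c' x"
  using good_cong1[OF assms] good_cong1[of n c' c x h] assms by auto

definition ok :: "nat \<Rightarrow> nat \<Rightarrow> bool" where
  "ok n h \<longleftrightarrow> (\<exists>F x. (\<forall>i\<in>{1..h}. inj_on (F i) {1..n}) \<and> x \<in> {1..n} \<and>
      good n h (C F h) x \<and> good n h (\<lambda>y z. C F h z y) x)"

lemma ok_profile:
  assumes "ok n h"
  shows "\<exists>p x. profile n h p \<and> x \<in> {1..n} \<and> good n h (cnt h p) x \<and> good n h (\<lambda>y z. cnt h p z y) x"
proof -
  obtain F x where F: "\<forall>i\<in>{1..h}. inj_on (F i) {1..n}" "x \<in> {1..n}"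
    "good n h (C F h) x" "good n h (\<lambda>y z. C F h z y) x" using assms unfolding ok_def by blast
  let ?p = "\<lambda>i. relf n (F i)"
  have "profile n h ?p" unfolding profile_def using F(1) relf_lin by blast
  moreover have "good n h (cnt h ?p) x"
    by (rule good_cong1[OF _ F(2) F(3)]) (use cnt_relf[OF F(1)] in auto)
  moreover have "good n h (\<lambda>y z. cnt h ?p z y) x"
    by (rule good_cong1[OF _ F(2) F(4)]) (use cnt_relf[OF F(1)] in auto)
  ultimately show ?thesis using F(2) by blast
qed

(* adding two opposite voters *)
lemma good_shift:
  assumes g: "good n h c x" and c': "\<forall>y\<in>{1..n}. \<forall>z\<in>{1..n}. c' y z = (if y = z then 0 else c y z + 1)"
    and r: "\<And>y. c y y = 0" and x: "x \<in> {1..n}"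
  shows "good n (h+2) c' x"
  unfolding good_def
proof (intro ballI impI)
  fix z assume z: "z \<in> {1..n}" "z \<noteq> x"
  obtain y where y: "y \<in> {1..n}" "h div 2 + 1 \<le> c y z" "\<forall>w\<in>{1..n}. c w x < c y z"
    using g z unfolding good_def by blast
  have yz: "y \<noteq> z" using y(2) r by (metis add_is_0 le_zero_eq one_neq_zero)
  have "(h+2) div 2 + 1 \<le> c' y z" using y(2) yz c' y(1) z(1) by simp
  moreover have "\<forall>w\<in>{1..n}. c' w x < c' y z"
  proof
    fix w assume w: "w \<in> {1..n}"
    show "c' w x < c' y z" using c' w y yz z r x by (cases "w = x") auto
  qed
  ultimately show "\<exists>y\<in>{1..n}. (h+2) div 2 + 1 \<le> c' y z \<and> (\<forall>w\<in>{1..n}. c' w x < c' y z)"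
    using y(1) by blast
qed

lemma C_shift:
  fixes F :: "nat \<Rightarrow> nat \<Rightarrow> nat" and h n y z :: nat
  defines "F' \<equiv> \<lambda>i. if i = h + 1 then (\<lambda>a. a) else if i = h + 2 then (\<lambda>a. n - a) else F i"
  assumes y: "y \<in> {1..n}" and z: "z \<in> {1..n}"
  shows "C F' (h+2) y z = (if y = z then 0 else C F h y z + 1)"
proof (cases "y = z")
  case True then show ?thesis by simp
next
  case False
  have e: "{i \<in> {1..h+2}. F' i y < F' i z} = {i \<in> {1..h}. F i y < F i z} \<union> {i \<in> {h+1,h+2}. F' i y < F' i z}"
    unfolding F'_def by auto
  have one: "card {i \<in> {h+1,h+2}. F' i y < F' i z} = 1"
  proof (cases "y < z")
    case True
    then have "{i \<in> {h+1,h+2}. F' i y < F' i z} = {h+1}" unfolding F'_def using y z by auto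
    then show ?thesis by simp
  next
    case False
    then have "{i \<in> {h+1,h+2}. F' i y < F' i z} = {h+2}" unfolding F'_def using y z \<open>y \<noteq> z\<close> by auto
    then show ?thesis by simp
  qed
  have "card ({i \<in> {1..h}. F i y < F i z} \<union> {i \<in> {h+1,h+2}. F' i y < F' i z}) =
        card {i \<in> {1..h}. F i y < F i z} + card {i \<in> {h+1,h+2}. F' i y < F' i z}"
    by (rule card_Un_disjoint) auto
  then show ?thesis using False one e unfolding C_def by simp
qed

lemma ok_voters:
  assumes "ok n h" shows "ok n (h+2)"
proof -
  obtain F x where F: "\<forall>i\<in>{1..h}. inj_on (F i) {1..n}" "x \<in> {1..n}"
    "good n h (C F h) x" "good n h (\<lambda>y z. C F h z y) x" using assms unfolding ok_def by blast
  define F' where "F' \<equiv> \<lambda>i. if i = h + 1 then (\<lambda>a::nat. a) else if i = h + 2 then (\<lambda>a. n - a) else F i"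
  have inj: "\<forall>i\<in>{1..h+2}. inj_on (F' i) {1..n}"
  proof
    fix i assume i: "i \<in> {1..h+2}"
    show "inj_on (F' i) {1..n}"
    proof (cases "i = h+1 \<or> i = h+2")
      case True then show ?thesis unfolding F'_def inj_on_def by auto
    next
      case False then show ?thesis using F(1) i unfolding F'_def by auto
    qed
  qed
  have cs: "\<forall>y\<in>{1..n}. \<forall>z\<in>{1..n}. C F' (h+2) y z = (if y = z then 0 else C F h y z + 1)"
  proof (intro ballI)
    fix y z assume yz: "y \<in> {1..n}" "z \<in> {1..n}"
    show "C F' (h+2) y z = (if y = z then 0 else C F h y z + 1)"
      unfolding F'_def by (rule C_shift[OF yz])
  qed
  have cs2: "\<forall>y\<in>{1..n}. \<forall>z\<in>{1..n}. C F' (h+2) z y = (if y = z then 0 else C F h z y + 1)"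
  proof (intro ballI)
    fix y z assume "y \<in> {1..n}" "z \<in> {1..n}"
    then show "C F' (h+2) z y = (if y = z then 0 else C F h z y + 1)" using cs by (cases "y = z") auto
  qed
  have r1: "\<And>y. C F h y y = 0" by simp
  have "good n (h+2) (C F' (h+2)) x" by (rule good_shift[OF F(3) cs r1 F(2)])
  moreover have "good n (h+2) (\<lambda>y z. C F' (h+2) z y) x"
    by (rule good_shift[OF F(4) cs2 r1 F(2)])
  ultimately show ?thesis unfolding ok_def using inj F(2) by blast
qed




lemma good_clone1:
  fixes c c' :: "nat \<Rightarrow> nat \<Rightarrow> nat"
  assumes g: "good n h c x" and x: "x \<in> {1..n}" and w: "w \<in> {1..n}" "w \<noteq> x"
    and e1: "\<forall>a\<in>{1..n}. \<forall>b\<in>{1..n}. c' a b = c a b"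
    and e2: "\<forall>b\<in>{1..n}. c' (Suc n) b = c w b"
    and e3: "c' w (Suc n) = h"
    and le: "\<And>a b. c a b \<le> h" and h2: "h \<ge> 2"
  shows "good (Suc n) h c' x"
  unfolding good_def
proof (intro ballI impI)
  fix z assume z: "z \<in> {1..Suc n}" "z \<noteq> x"
  have bound: "\<And>v. v \<in> {1..n} \<Longrightarrow> c v x < h"
  proof -
    fix v assume v: "v \<in> {1..n}"
    obtain y where "y \<in> {1..n}" "\<forall>u\<in>{1..n}. c u x < c y w" using g w unfolding good_def by blast
    then show "c v x < h" using v le[of y w] by fastforce
  qed
  have N': "{1..Suc n} = insert (Suc n) {1..n}" by auto
  show "\<exists>y\<in>{1..Suc n}. h div 2 + 1 \<le> c' y z \<and> (\<forall>u\<in>{1..Suc n}. c' u x < c' y z)"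
  proof (cases "z = Suc n")
    case True
    have "h div 2 + 1 \<le> c' w z" using True e3 h2 by simp
    moreover have "\<forall>u\<in>{1..Suc n}. c' u x < c' w z"
      unfolding N' using True e3 e1 e2 x bound w by auto
    ultimately show ?thesis using w by (intro bexI[of _ w]) auto
  next
    case False
    then have zN: "z \<in> {1..n}" using z by auto
    obtain y where y: "y \<in> {1..n}" "h div 2 + 1 \<le> c y z" "\<forall>u\<in>{1..n}. c u x < c y z"
      using g zN z(2) unfolding good_def by blast
    have "h div 2 + 1 \<le> c' y z" using y zN e1 by simp
    moreover have "\<forall>u\<in>{1..Suc n}. c' u x < c' y z"
      unfolding N' using y zN e1 e2 x w by auto
    ultimately show ?thesis using y(1) by (intro bexI[of _ y]) auto
  qed
qed

lemma good_clone2: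
  fixes c c' :: "nat \<Rightarrow> nat \<Rightarrow> nat"
  assumes g: "good n h (\<lambda>a b. c b a) x" and x: "x \<in> {1..n}" and w: "w \<in> {1..n}" "w \<noteq> x"
    and e1: "\<forall>a\<in>{1..n}. \<forall>b\<in>{1..n}. c' a b = c a b"
    and e2: "\<forall>b\<in>{1..n}. c' (Suc n) b = c w b"
    and e4: "\<forall>a\<in>{1..n}. a \<noteq> w \<longrightarrow> c' a (Suc n) = c a w"
    and r: "c w w = 0"
  shows "good (Suc n) h (\<lambda>a b. c' b a) x"
  unfolding good_def
proof (intro ballI impI)
  fix z assume z: "z \<in> {1..Suc n}" "z \<noteq> x"
  have N': "{1..Suc n} = insert (Suc n) {1..n}" by auto
  have xw: "c' x (Suc n) = c x w" using e4 x w by auto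
  show "\<exists>y\<in>{1..Suc n}. h div 2 + 1 \<le> c' z y \<and> (\<forall>u\<in>{1..Suc n}. c' x u < c' z y)"
  proof (cases "z = Suc n")
    case True
    obtain y where y: "y \<in> {1..n}" "h div 2 + 1 \<le> c w y" "\<forall>u\<in>{1..n}. c x u < c w y"
      using g w unfolding good_def by auto
    have "h div 2 + 1 \<le> c' z y" using True y e2 by simp
    moreover have "\<forall>u\<in>{1..Suc n}. c' x u < c' z y"
      unfolding N' using True y e1 e2 x w xw by auto
    ultimately show ?thesis using y(1) by (intro bexI[of _ y]) auto
  next
    case False
    then have zN: "z \<in> {1..n}" using z by auto
    obtain y where y: "y \<in> {1..n}" "h div 2 + 1 \<le> c z y" "\<forall>u\<in>{1..n}. c x u < c z y"
      using g zN z(2) unfolding good_def by auto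
    have "h div 2 + 1 \<le> c' z y" using y zN e1 by simp
    moreover have "\<forall>u\<in>{1..Suc n}. c' x u < c' z y"
      unfolding N' using y zN e1 x w xw by auto
    ultimately show ?thesis using y(1) by (intro bexI[of _ y]) auto
  qed
qed

lemma ok_alt:
  assumes ok: "ok n h" and n2: "n \<ge> 2" and h2: "h \<ge> 2"
  shows "ok (Suc n) h"
proof -
  obtain F x where F: "\<forall>i\<in>{1..h}. inj_on (F i) {1..n}" "x \<in> {1..n}"
    "good n h (C F h) x" "good n h (\<lambda>y z. C F h z y) x" using ok unfolding ok_def by blast
  define w where "w = (if x = 1 then 2 else (1::nat))"
  have w: "w \<in> {1..n}" "w \<noteq> x" unfolding w_def using n2 by auto
  define F' where "F' = (\<lambda>i a. if a = Suc n then 2 * F i w + 1 else 2 * F i a)"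
  have inj: "\<forall>i\<in>{1..h}. inj_on (F' i) {1..Suc n}"
  proof
    fix i assume i: "i \<in> {1..h}"
    show "inj_on (F' i) {1..Suc n}"
    proof (rule inj_onI)
      fix a b assume a: "a \<in> {1..Suc n}" and b: "b \<in> {1..Suc n}" and eq: "F' i a = F' i b"
      show "a = b"
      proof (cases "a = Suc n"; cases "b = Suc n")
        assume "a \<noteq> Suc n" "b \<noteq> Suc n"
        then have "F i a = F i b" "a \<in> {1..n}" "b \<in> {1..n}" using eq a b unfolding F'_def by auto
        then show "a = b" using F(1) i unfolding inj_on_def by blast
      next
        assume "a = Suc n" "b \<noteq> Suc n"
        then have "2 * F i w + 1 = 2 * F i b" using eq unfolding F'_def by auto
        then show "a = b" by presburger
      next
        assume "a \<noteq> Suc n" "b = Suc n"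
        then have "2 * F i a = 2 * F i w + 1" using eq unfolding F'_def by auto
        then show "a = b" by presburger
      qed simp
    qed
  qed
  have e1: "\<forall>a\<in>{1..n}. \<forall>b\<in>{1..n}. C F' h a b = C F h a b"
    unfolding C_def F'_def by auto
  have ar: "\<And>u v::nat. Suc (2*u) < 2*v \<longleftrightarrow> u < v" by arith
  have e2: "\<forall>b\<in>{1..n}. C F' h (Suc n) b = C F h w b"
    unfolding C_def F'_def by (auto simp: ar)
  have e3: "C F' h w (Suc n) = h"
  proof -
    have "{i \<in> {1..h}. F' i w < F' i (Suc n)} = {1..h}" unfolding F'_def using w by auto
    then show ?thesis unfolding C_def by simp
  qed
  have e4: "\<forall>a\<in>{1..n}. a \<noteq> w \<longrightarrow> C F' h a (Suc n) = C F h a w"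
  proof (intro ballI impI)
    fix a assume a: "a \<in> {1..n}" "a \<noteq> w"
    have "{i \<in> {1..h}. F' i a < F' i (Suc n)} = {i \<in> {1..h}. F i a < F i w}"
    proof (intro Collect_cong conj_cong refl)
      fix i assume i: "i \<in> {1..h}"
      have "F i a \<noteq> F i w" using F(1) i a w(1) unfolding inj_on_def by blast
      then show "F' i a < F' i (Suc n) \<longleftrightarrow> F i a < F i w" unfolding F'_def using a by auto
    qed
    then show "C F' h a (Suc n) = C F h a w" unfolding C_def by simp
  qed
  have "good (Suc n) h (C F' h) x"
    by (rule good_clone1[OF F(3) F(2) w e1 e2 e3 C_le h2])
  moreover have "good (Suc n) h (\<lambda>a b. C F' h b a) x"
    by (rule good_clone2[OF F(4) F(2) w e1 e2 e4 C_refl])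
  moreover have "x \<in> {1..Suc n}" using F(2) by auto
  ultimately show ?thesis unfolding ok_def using inj by blast
qed




lemma C_0[simp]: "C F 0 y z = 0" unfolding C_def by simp
lemma C_Suc: "C F (Suc h) y z = C F h y z + (if F (Suc h) y < F (Suc h) z then 1 else 0)"
proof -
  have "{i \<in> {1..Suc h}. F i y < F i z} = {i \<in> {1..h}. F i y < F i z} \<union> {i \<in> {Suc h}. F i y < F i z}" by auto
  moreover have "card ({i \<in> {1..h}. F i y < F i z} \<union> {i \<in> {Suc h}. F i y < F i z}) =
     card {i \<in> {1..h}. F i y < F i z} + card {i \<in> {Suc h}. F i y < F i z}" by (rule card_Un_disjoint) auto
  moreover have "{i \<in> {Suc h}. F i y < F i z} = (if F (Suc h) y < F (Suc h) z then {Suc h} else {})" by auto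
  ultimately show ?thesis unfolding C_def by simp
qed
lemma C_1: "C F (Suc 0) y z = (if F 1 y < F 1 z then 1 else 0)" using C_Suc[of F 0] by simp
lemma C_num: "C F (numeral k) y z = C F (pred_numeral k) y z + (if F (numeral k) y < F (numeral k) z then 1 else 0)"
  by (simp add: numeral_eq_Suc C_Suc)

lemma I4: "{1..4::nat} = {1,2,3,4}" by auto
lemma I5: "{1..5::nat} = {1,2,3,4,5}" by auto
lemma I6: "{1..6::nat} = {1,2,3,4,5,6}" by auto
lemma I7: "{1..7::nat} = {1,2,3,4,5,6,7}" by auto
lemma I8: "{1..8::nat} = {1,2,3,4,5,6,7,8}" by auto
lemma I9: "{1..9::nat} = {1,2,3,4,5,6,7,8,9}" by auto
definition "F4_6 = (\<lambda>i a. [[1::nat, 4, 2, 3], [4, 1, 2, 3], [4, 3, 1, 2], [2, 4, 3, 1], [3, 1, 4, 2], [1, 2, 3, 4]] ! (i-1) ! (a-1))"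
lemma base_4_6: "ok 4 6"
  unfolding ok_def
proof (intro exI conjI)
  show "\<forall>i\<in>{1..6}. inj_on (F4_6 i) {1..4}" unfolding I6 I4 by (simp add: F4_6_def)
  show "(2::nat) \<in> {1..4}" by simp
  show "good 4 6 (C F4_6 6) 2" unfolding good_def I4 by (simp add: C_num C_1 F4_6_def)
  show "good 4 6 (\<lambda>y z. C F4_6 6 z y) 2" unfolding good_def I4 by (simp add: C_num C_1 F4_6_def)
qed

definition "F4_8 = (\<lambda>i a. [[1::nat, 2, 3, 4], [3, 4, 1, 2], [3, 1, 2, 4], [4, 1, 3, 2], [2, 4, 1, 3], [3, 2, 4, 1], [3, 2, 4, 1], [1, 4, 2, 3]] ! (i-1) ! (a-1))"
lemma base_4_8: "ok 4 8"
  unfolding ok_def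
proof (intro exI conjI)
  show "\<forall>i\<in>{1..8}. inj_on (F4_8 i) {1..4}" unfolding I8 I4 by (simp add: F4_8_def)
  show "(1::nat) \<in> {1..4}" by simp
  show "good 4 8 (C F4_8 8) 1" unfolding good_def I4 by (simp add: C_num C_1 F4_8_def)
  show "good 4 8 (\<lambda>y z. C F4_8 8 z y) 1" unfolding good_def I4 by (simp add: C_num C_1 F4_8_def)
qed

definition "F4_9 = (\<lambda>i a. [[1::nat, 2, 3, 4], [4, 3, 1, 2], [1, 3, 2, 4], [2, 3, 4, 1], [1, 2, 3, 4], [3, 2, 4, 1], [4, 3, 1, 2], [4, 1, 2, 3], [2, 4, 3, 1]] ! (i-1) ! (a-1))"
lemma base_4_9: "ok 4 9"
  unfolding ok_def
proof (intro exI conjI)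
  show "\<forall>i\<in>{1..9}. inj_on (F4_9 i) {1..4}" unfolding I9 I4 by (simp add: F4_9_def)
  show "(2::nat) \<in> {1..4}" by simp
  show "good 4 9 (C F4_9 9) 2" unfolding good_def I4 by (simp add: C_num C_1 F4_9_def)
  show "good 4 9 (\<lambda>y z. C F4_9 9 z y) 2" unfolding good_def I4 by (simp add: C_num C_1 F4_9_def)
qed

definition "F5_4 = (\<lambda>i a. [[1::nat, 2, 5, 3, 4], [5, 1, 3, 4, 2], [2, 4, 1, 3, 5], [4, 5, 3, 2, 1]] ! (i-1) ! (a-1))"
lemma base_5_4: "ok 5 4"
  unfolding ok_def
proof (intro exI conjI)
  show "\<forall>i\<in>{1..4}. inj_on (F5_4 i) {1..5}" unfolding I4 I5 by (simp add: F5_4_def)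
  show "(4::nat) \<in> {1..5}" by simp
  show "good 5 4 (C F5_4 4) 4" unfolding good_def I5 by (simp add: C_num C_1 F5_4_def)
  show "good 5 4 (\<lambda>y z. C F5_4 4 z y) 4" unfolding good_def I5 by (simp add: C_num C_1 F5_4_def)
qed

definition "F5_7 = (\<lambda>i a. [[3::nat, 1, 4, 5, 2], [5, 1, 2, 3, 4], [5, 4, 1, 2, 3], [1, 5, 2, 3, 4], [3, 5, 4, 1, 2], [2, 3, 4, 5, 1], [4, 1, 5, 2, 3]] ! (i-1) ! (a-1))"
lemma base_5_7: "ok 5 7"
  unfolding ok_def
proof (intro exI conjI)
  show "\<forall>i\<in>{1..7}. inj_on (F5_7 i) {1..5}" unfolding I7 I5 by (simp add: F5_7_def)
  show "(2::nat) \<in> {1..5}" by simp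
  show "good 5 7 (C F5_7 7) 2" unfolding good_def I5 by (simp add: C_num C_1 F5_7_def)
  show "good 5 7 (\<lambda>y z. C F5_7 7 z y) 2" unfolding good_def I5 by (simp add: C_num C_1 F5_7_def)
qed

definition "F6_5 = (\<lambda>i a. [[6::nat, 4, 3, 2, 5, 1], [2, 3, 6, 5, 1, 4], [3, 4, 1, 6, 2, 5], [1, 5, 4, 3, 6, 2], [5, 2, 3, 1, 4, 6]] ! (i-1) ! (a-1))"
lemma base_6_5: "ok 6 5"
  unfolding ok_def
proof (intro exI conjI)
  show "\<forall>i\<in>{1..5}. inj_on (F6_5 i) {1..6}" unfolding I5 I6 by (simp add: F6_5_def)
  show "(2::nat) \<in> {1..6}" by simp
  show "good 6 5 (C F6_5 5) 2" unfolding good_def I6 by (simp add: C_num C_1 F6_5_def)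
  show "good 6 5 (\<lambda>y z. C F6_5 5 z y) 2" unfolding good_def I6 by (simp add: C_num C_1 F6_5_def)
qed



lemma ok_n4: "h \<ge> 6 \<Longrightarrow> h \<noteq> 7 \<Longrightarrow> ok 4 h"
proof (induction h rule: less_induct)
  case (less h)
  show ?case
  proof (cases "h = 6 \<or> h = 8 \<or> h = 9")
    case True
    then show ?thesis using base_4_6 base_4_8 base_4_9 by auto
  next
    case False
    then have h10: "h \<ge> 10" using less.prems by auto
    have "ok 4 (h - 2)" by (rule less.IH) (use h10 in auto)
    then have ok2: "ok 4 (h - 2 + 2)" by (rule ok_voters)
    have hh: "h - 2 + 2 = h" using h10 by arith
    show ?thesis using ok2 unfolding hh .
  qed
qed

lemma ok_up:
  assumes "ok m h" "m \<ge> 2" "h \<ge> 2" "m \<le> n"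
  shows "ok n h"
  using assms(4)
proof (induction n rule: dec_induct)
  case base then show ?case using assms(1) .
next
  case (step k)
  then show ?case using ok_alt[OF step.IH] assms(2,3) by simp
qed

lemma ok_all:
  assumes "n \<ge> 2" "h \<ge> 2" "(h, n) \<notin> T1"
  shows "ok n h"
proof -
  have hn: "h \<ge> 4" "n \<ge> 4" "(h, n) \<notin> {(4,4), (5,4), (7,4), (5,5)}" using assms(3) unfolding T1_def by auto
  consider "h = 4" | "h = 5" | "h = 7" | "h \<ge> 6" "h \<noteq> 7" using hn by linarith
  then show ?thesis
  proof cases
    case 1 then show ?thesis using ok_up[OF base_5_4] hn by auto
  next
    case 2 then show ?thesis using ok_up[OF base_6_5] hn by auto
  next
    case 3 then show ?thesis using ok_up[OF base_5_7] hn by auto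
  next
    case 4 then show ?thesis using ok_up[OF ok_n4[OF 4]] hn by auto
  qed
qed

theorem proposition3:
  fixes n h :: nat
  assumes "n \<ge> 2" and "h \<ge> 2"
  shows "(\<exists>p x. profile n h p \<and> x \<in> {1..n} \<and>
            Dmu n h (mu n h p) p = {x} \<and>
            Dmu n h (mu n h (rev_profile p)) (rev_profile p) = {x})
         \<longleftrightarrow> (h, n) \<notin> T1"
proof -
  have h1: "h \<ge> 1" using assms by simp
  have crev: "\<And>p. cnt h (rev_profile p) = (\<lambda>y z. cnt h p z y)" by (intro ext) (simp add: cnt_rev)
  have step: "(Dmu n h (mu n h p) p = {x} \<and> Dmu n h (mu n h (rev_profile p)) (rev_profile p) = {x})
      \<longleftrightarrow> (good n h (cnt h p) x \<and> good n h (\<lambda>y z. cnt h p z y) x)"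
    if p: "profile n h p" and x: "x \<in> {1..n}" for p x
    using char[OF p h1 assms(1) x] char[OF profile_rev[OF p] h1 assms(1) x] crev[of p] by simp
  have eq: "(\<exists>p x. profile n h p \<and> x \<in> {1..n} \<and>
            Dmu n h (mu n h p) p = {x} \<and>
            Dmu n h (mu n h (rev_profile p)) (rev_profile p) = {x})
      \<longleftrightarrow> (\<exists>p x. profile n h p \<and> x \<in> {1..n} \<and> good n h (cnt h p) x \<and> good n h (\<lambda>y z. cnt h p z y) x)"
    using step by blast
  show ?thesis
  proof
    assume "\<exists>p x. profile n h p \<and> x \<in> {1..n} \<and>
            Dmu n h (mu n h p) p = {x} \<and>
            Dmu n h (mu n h (rev_profile p)) (rev_profile p) = {x}"
    then obtain p x where "profile n h p" "x \<in> {1..n}" "good n h (cnt h p) x" "good n h (\<lambda>y z. cnt h p z y) x"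
      using eq by blast
    then show "(h, n) \<notin> T1" using impossible assms by blast
  next
    assume "(h, n) \<notin> T1"
    then have "ok n h" using ok_all assms by blast
    then show "\<exists>p x. profile n h p \<and> x \<in> {1..n} \<and>
            Dmu n h (mu n h p) p = {x} \<and>
            Dmu n h (mu n h (rev_profile p)) (rev_profile p) = {x}"
      using ok_profile eq by blast
  qed
qed

end
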